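(* Let $X$ be an $\omega$-well-filtered coherent $d$-space. If $X\times X$ is a Fréchet space, then $X$ is sober.
   Context: For a $T_0$ space $X$, the specialization order is $x\le y$ iff $x\in\overline{\{y\}}$; a subset is saturated if it is an upper set in this order. $X$ is a $d$-space if it is $T_0$, its specialization order is a dcpo, and every open set of $X$ is Scott open with respect to the specialization order. $X$ is $\omega$-well-filtered if for every countable filtered family $\mathcal F$ of compact saturated subsets of $X$ and every open $U$, $\bigcap\mathcal F\subseteq U$ implies $F\subseteq U$ for some $F\in\mathcal F$. $X$ is coherent if the intersection of any two compact saturated subsets is compact. A space is Fréchet if whenever $x$ lies in the closure of a set $A$, some sequence in $A$ converges to $x$. A $T_0$ space is sober if every irreducible closed set equals $\overline{\{x\}}$ for some point $x$. *)

theory Defs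
  imports "HOL-Analysis.Analysis"
begin

definition spec_le :: "'a topology \<Rightarrow> 'a \<Rightarrow> 'a \<Rightarrow> bool" where
  "spec_le X x y \<longleftrightarrow> x \<in> topspace X \<and> y \<in> topspace X \<and> x \<in> X closure_of {y}"

definition saturated_in :: "'a topology \<Rightarrow> 'a set \<Rightarrow> bool" where
  "saturated_in X A \<longleftrightarrow> A \<subseteq> topspace X \<and> (\<forall>x\<in>A. \<forall>y. spec_le X x y \<longrightarrow> y \<in> A)"

definition spec_directed :: "'a topology \<Rightarrow> 'a set \<Rightarrow> bool" where
  "spec_directed X D \<longleftrightarrow> D \<noteq> {} \<and> D \<subseteq> topspace X \<and>
     (\<forall>x\<in>D. \<forall>y\<in>D. \<exists>z\<in>D. spec_le X x z \<and> spec_le X y z)"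

definition spec_is_sup :: "'a topology \<Rightarrow> 'a set \<Rightarrow> 'a \<Rightarrow> bool" where
  "spec_is_sup X D s \<longleftrightarrow> s \<in> topspace X \<and> (\<forall>d\<in>D. spec_le X d s) \<and>
     (\<forall>u\<in>topspace X. (\<forall>d\<in>D. spec_le X d u) \<longrightarrow> spec_le X s u)"

definition spec_dcpo :: "'a topology \<Rightarrow> bool" where
  "spec_dcpo X \<longleftrightarrow> (\<forall>D. spec_directed X D \<longrightarrow> (\<exists>s. spec_is_sup X D s))"

definition spec_scott_open :: "'a topology \<Rightarrow> 'a set \<Rightarrow> bool" where
  "spec_scott_open X U \<longleftrightarrow> saturated_in X U \<and>
     (\<forall>D s. spec_directed X D \<longrightarrow> spec_is_sup X D s \<longrightarrow> s \<in> U \<longrightarrow> D \<inter> U \<noteq> {})"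

definition d_space :: "'a topology \<Rightarrow> bool" where
  "d_space X \<longleftrightarrow> t0_space X \<and> spec_dcpo X \<and> (\<forall>U. openin X U \<longrightarrow> spec_scott_open X U)"

definition filtered_compact_saturated :: "'a topology \<Rightarrow> 'a set set \<Rightarrow> bool" where
  "filtered_compact_saturated X \<F> \<longleftrightarrow> \<F> \<noteq> {} \<and>
     (\<forall>K\<in>\<F>. compactin X K \<and> saturated_in X K) \<and>
     (\<forall>A\<in>\<F>. \<forall>B\<in>\<F>. \<exists>C\<in>\<F>. C \<subseteq> A \<inter> B)"

definition omega_well_filtered :: "'a topology \<Rightarrow> bool" where
  "omega_well_filtered X \<longleftrightarrow>
     (\<forall>\<F> U. countable \<F> \<and> filtered_compact_saturated X \<F> \<and> openin X U \<and> \<Inter>\<F> \<subseteq> U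
        \<longrightarrow> (\<exists>F\<in>\<F>. F \<subseteq> U))"

definition coherent_space :: "'a topology \<Rightarrow> bool" where
  "coherent_space X \<longleftrightarrow>
     (\<forall>A B. compactin X A \<and> saturated_in X A \<and> compactin X B \<and> saturated_in X B
        \<longrightarrow> compactin X (A \<inter> B))"

definition frechet_space :: "'a topology \<Rightarrow> bool" where
  "frechet_space X \<longleftrightarrow>
     (\<forall>A x. A \<subseteq> topspace X \<and> x \<in> X closure_of A \<longrightarrow>
        (\<exists>f. (\<forall>n. f n \<in> A) \<and> limitin X f x sequentially))"

definition irreducible_closed :: "'a topology \<Rightarrow> 'a set \<Rightarrow> bool" where
  "irreducible_closed X A \<longleftrightarrow> closedin X A \<and> A \<noteq> {} \<and>
     (\<forall>B C. closedin X B \<and> closedin X C \<and> A \<subseteq> B \<union> C \<longrightarrow> A \<subseteq> B \<or> A \<subseteq> C)"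

definition sober_space :: "'a topology \<Rightarrow> bool" where
  "sober_space X \<longleftrightarrow> t0_space X \<and>
     (\<forall>A. irreducible_closed X A \<longrightarrow> (\<exists>x\<in>topspace X. A = X closure_of {x}))"

end

theory Submission
  imports Defs
begin

lemma spec_le_open:
  assumes "openin X U" "x \<in> U" "spec_le X x y" shows "y \<in> U"
proof (rule ccontr)
  assume "y \<notin> U"
  have "closedin X (topspace X - U)" using assms(1) by auto
  moreover have "{y} \<subseteq> topspace X - U" using assms(3) \<open>y \<notin> U\<close> by (auto simp: spec_le_def)
  ultimately have "X closure_of {y} \<subseteq> topspace X - U" by (rule closure_of_minimal[rotated])
  thus False using assms(2,3) by (auto simp: spec_le_def)
qed

lemma spec_le_trans:
  assumes "spec_le X x y" "spec_le X y z" shows "spec_le X x z"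
proof -
  have "X closure_of {y} \<subseteq> X closure_of {z}"
    using assms(2) by (intro closure_of_minimal) (auto simp: spec_le_def)
  thus ?thesis using assms by (auto simp: spec_le_def)
qed

lemma spec_le_refl: "x \<in> topspace X \<Longrightarrow> spec_le X x x"
  using closure_of_subset[of "{x}" X] by (auto simp: spec_le_def)

lemma spec_le_closed:
  assumes "closedin X C" "y \<in> C" "spec_le X x y" shows "x \<in> C"
proof -
  have "X closure_of {y} \<subseteq> C" using assms by (intro closure_of_minimal) auto
  thus ?thesis using assms by (auto simp: spec_le_def)
qed

lemma saturated_Int: "saturated_in X A \<Longrightarrow> saturated_in X B \<Longrightarrow> saturated_in X (A \<inter> B)"
  unfolding saturated_in_def by blast

definition up :: "'a topology \<Rightarrow> 'a set \<Rightarrow> 'a set" where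
  "up X S = {y \<in> topspace X. \<exists>s\<in>S. spec_le X s y}"

lemma up_saturated: "saturated_in X (up X S)"
  unfolding saturated_in_def
proof (intro conjI ballI allI impI)
  show "up X S \<subseteq> topspace X" by (auto simp: up_def)
next
  fix x y assume x: "x \<in> up X S" and xy: "spec_le X x y"
  then obtain s where "s \<in> S" "spec_le X s x" by (auto simp: up_def)
  hence "spec_le X s y" using xy spec_le_trans by metis
  moreover have "y \<in> topspace X" using xy by (simp add: spec_le_def)
  ultimately show "y \<in> up X S" using \<open>s \<in> S\<close> by (auto simp: up_def)
qed

lemma up_compact:
  assumes cS: "compactin X S" shows "compactin X (up X S)"
proof -
  have St: "S \<subseteq> topspace X" using cS by (simp add: compactin_def)
  have cov: "\<exists>F. finite F \<and> F \<subseteq> U \<and> up X S \<subseteq> \<Union>F"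
    if Uo: "\<forall>B\<in>U. openin X B" and Uc: "up X S \<subseteq> \<Union>U" for U
  proof -
    have "S \<subseteq> up X S"
    proof
      fix z assume z: "z \<in> S"
      hence zt: "z \<in> topspace X" using St by blast
      have "spec_le X z z" using spec_le_refl[OF zt] .
      thus "z \<in> up X S" unfolding up_def using z zt by blast
    qed
    hence SU: "S \<subseteq> \<Union>U" using Uc by (rule subset_trans)
    have cc: "\<forall>U. (\<forall>B\<in>U. openin X B) \<and> S \<subseteq> \<Union>U \<longrightarrow> (\<exists>F. finite F \<and> F \<subseteq> U \<and> S \<subseteq> \<Union>F)"
      using cS[unfolded compactin_def] by (rule conjunct2)
    have "\<exists>F. finite F \<and> F \<subseteq> U \<and> S \<subseteq> \<Union>F"
      using cc[rule_format, OF conjI[OF Uo SU]] .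
    then obtain F where F: "finite F" "F \<subseteq> U" "S \<subseteq> \<Union>F" by blast
    have "up X S \<subseteq> \<Union>F"
    proof
      fix y assume "y \<in> up X S"
      then obtain s where s: "s \<in> S" "spec_le X s y" unfolding up_def by blast
      then obtain B where B: "B \<in> F" "s \<in> B" using F(3) by blast
      have "openin X B" using B(1) F(2) Uo by blast
      hence "y \<in> B" by (rule spec_le_open[OF _ B(2) s(2)])
      thus "y \<in> \<Union>F" using B(1) by blast
    qed
    thus ?thesis using F(1,2) by blast
  qed
  have "up X S \<subseteq> topspace X" unfolding up_def by blast
  thus ?thesis unfolding compactin_def
  proof (intro conjI allI impI)
    fix U assume "(\<forall>B\<in>U. openin X B) \<and> up X S \<subseteq> \<Union>U"
    thus "\<exists>F. finite F \<and> F \<subseteq> U \<and> up X S \<subseteq> \<Union>F" using cov by (elim conjE)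
  qed
qed

lemma limit_below:
  assumes lim: "limitin X x a sequentially" and y: "y \<in> topspace X"
    and inf: "\<forall>n. \<exists>m\<ge>n. spec_le X (x m) y"
  shows "spec_le X a y"
proof -
  have a: "a \<in> topspace X" using lim limitin_topspace by metis
  have "a \<in> X closure_of {y}"
    unfolding in_closure_of
  proof (intro conjI strip)
    fix T assume T: "a \<in> T \<and> openin X T"
    then obtain N where N: "\<forall>n\<ge>N. x n \<in> T" using lim unfolding limitin_sequentially by blast
    obtain m where "m \<ge> N" "spec_le X (x m) y" using inf by blast
    hence "y \<in> T" using spec_le_open[of X T "x m" y] N T by blast
    thus "\<exists>z. z \<in> {y} \<and> z \<in> T" by auto
  qed (use a in auto)
  thus ?thesis using a y by (auto simp: spec_le_def)
qed

lemma irr_meet: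
  assumes A: "irreducible_closed X A" and U: "openin X U" "U \<inter> A \<noteq> {}"
    and V: "openin X V" "V \<inter> A \<noteq> {}"
  shows "U \<inter> V \<inter> A \<noteq> {}"
proof
  assume e: "U \<inter> V \<inter> A = {}"
  have sub: "A \<subseteq> topspace X" using A closedin_subset by (auto simp: irreducible_closed_def)
  have "A \<subseteq> (topspace X - U) \<union> (topspace X - V)" using e sub by auto
  moreover have "closedin X (topspace X - U)" "closedin X (topspace X - V)" using U V by auto
  ultimately have "A \<subseteq> topspace X - U \<or> A \<subseteq> topspace X - V"
    using A unfolding irreducible_closed_def by blast
  thus False using U V by auto
qed

lemma directed_irr:
  assumes wf: "omega_well_filtered X" and coh: "coherent_space X"
    and fr: "frechet_space (prod_topology X X)"
    and A: "irreducible_closed X A" and a: "a \<in> A" and b: "b \<in> A"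
  shows "\<exists>c\<in>A. spec_le X a c \<and> spec_le X b c"
proof (rule ccontr)
  assume nc: "\<not> (\<exists>c\<in>A. spec_le X a c \<and> spec_le X b c)"
  have cA: "closedin X A" using A by (auto simp: irreducible_closed_def)
  have sub: "A \<subseteq> topspace X" using cA closedin_subset by auto
  define \<Delta> where "\<Delta> = (\<lambda>x. (x,x)) ` A"
  have "(a,b) \<in> prod_topology X X closure_of \<Delta>"
    unfolding in_closure_of
  proof (intro conjI strip)
    show "(a, b) \<in> topspace (prod_topology X X)" using a b sub by auto
  next
    fix T assume T: "(a, b) \<in> T \<and> openin (prod_topology X X) T"
    then obtain U V where UV: "openin X U" "openin X V" "a \<in> U" "b \<in> V" "U \<times> V \<subseteq> T"
      unfolding openin_prod_topology_alt by blast
    have "U \<inter> V \<inter> A \<noteq> {}" using irr_meet[OF A UV(1) _ UV(2)] UV a b by blast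
    then obtain z where "z \<in> U" "z \<in> V" "z \<in> A" by blast
    thus "\<exists>y. y \<in> \<Delta> \<and> y \<in> T" using UV unfolding \<Delta>_def by blast
  qed
  moreover have "\<Delta> \<subseteq> topspace (prod_topology X X)" using sub by (auto simp: \<Delta>_def)
  ultimately obtain f where f: "\<forall>n. f n \<in> \<Delta>" "limitin (prod_topology X X) f (a,b) sequentially"
    using fr unfolding frechet_space_def by blast
  define x where "x = (\<lambda>n. fst (f n))"
  have fx0: "f n = (x n, x n) \<and> x n \<in> A" for n
    using f(1)[rule_format, of n] unfolding \<Delta>_def x_def by auto
  have fx: "f n = (x n, x n)" "x n \<in> A" for n using fx0[of n] by auto
  have "fst \<circ> f = x" "snd \<circ> f = x" using fx by (auto simp: fun_eq_iff)
  hence la: "limitin X x a sequentially" and lb: "limitin X x b sequentially"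
    using f(2) unfolding limitin_pairwise by auto
  define K where "K = (\<lambda>n. up X (insert a (x ` {n..})) \<inter> up X (insert b (x ` {n..})))"
  define \<F> where "\<F> = range K"
  have Kmono: "K m \<subseteq> K n" if "n \<le> m" for m n
    using that unfolding K_def up_def by auto
  have Kcs: "compactin X (K n) \<and> saturated_in X (K n)" for n
  proof -
    have t: "x ` {n..} \<subseteq> topspace X" using fx sub by auto
    have r: "x ` {n..} \<subseteq> range x" by auto
    have c1: "compactin X (insert a (x ` {n..}))"
      by (rule compactin_sequence_with_limit[OF la r t])
    have c2: "compactin X (insert b (x ` {n..}))"
      by (rule compactin_sequence_with_limit[OF lb r t])
    have "compactin X (K n)" unfolding K_def
      using coh[unfolded coherent_space_def, rule_format, OF conjI[OF up_compact[OF c1] conjI[OF up_saturated conjI[OF up_compact[OF c2] up_saturated]]]] .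
    moreover have "saturated_in X (K n)" unfolding K_def
      using saturated_Int[OF up_saturated up_saturated] .
    ultimately show ?thesis by blast
  qed
  have filt: "filtered_compact_saturated X \<F>"
    unfolding filtered_compact_saturated_def \<F>_def
  proof (intro conjI ballI)
    fix P Q assume "P \<in> range K" "Q \<in> range K"
    then obtain i j where "P = K i" "Q = K j" by auto
    thus "\<exists>C\<in>range K. C \<subseteq> P \<inter> Q" using Kmono[of i "max i j"] Kmono[of j "max i j"] by auto
  qed (use Kcs in blast)+
  define W where "W = topspace X - A"
  have oW: "openin X W" using cA by (auto simp: W_def)
  have "\<Inter>\<F> \<subseteq> W"
  proof
    fix y assume y: "y \<in> \<Inter>\<F>"
    have yK: "y \<in> K n" for n using y by (auto simp: \<F>_def)
    hence yt: "y \<in> topspace X" by (auto simp: K_def up_def)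
    have ha: "spec_le X a y"
    proof (cases "spec_le X a y")
      case False
      have "\<forall>n. \<exists>m\<ge>n. spec_le X (x m) y"
      proof
        fix n show "\<exists>m\<ge>n. spec_le X (x m) y" using yK[of n] False by (auto simp: K_def up_def)
      qed
      thus ?thesis using limit_below[OF la yt] by blast
    qed
    have hb: "spec_le X b y"
    proof (cases "spec_le X b y")
      case False
      have "\<forall>n. \<exists>m\<ge>n. spec_le X (x m) y"
      proof
        fix n show "\<exists>m\<ge>n. spec_le X (x m) y" using yK[of n] False by (auto simp: K_def up_def)
      qed
      thus ?thesis using limit_below[OF lb yt] by blast
    qed
    show "y \<in> W" using nc ha hb yt by (auto simp: W_def)
  qed
  moreover have "countable \<F>" by (simp add: \<F>_def)
  ultimately obtain F where "F \<in> \<F>" "F \<subseteq> W" using wf filt oW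
    unfolding omega_well_filtered_def by blast
  then obtain n where "K n \<subseteq> W" by (auto simp: \<F>_def)
  moreover have "x n \<in> K n"
  proof -
    have xt: "x n \<in> topspace X" using fx(2)[of n] sub by blast
    have "x n \<in> x ` {n..}" by simp
    hence "x n \<in> up X (insert a (x ` {n..}))" "x n \<in> up X (insert b (x ` {n..}))"
      using xt spec_le_refl[OF xt] unfolding up_def by blast+
    thus ?thesis by (simp add: K_def)
  qed
  ultimately show False using fx by (auto simp: W_def)
qed

theorem theorem3p9:
  fixes X :: "'a topology"
  assumes "d_space X"
    and "omega_well_filtered X"
    and "coherent_space X"
    and "frechet_space (prod_topology X X)"
  shows "sober_space X"
  unfolding sober_space_def
proof (intro conjI allI impI)
  show "t0_space X" using assms(1) by (simp add: d_space_def)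
next
  fix A assume A: "irreducible_closed X A"
  have cA: "closedin X A" and ne: "A \<noteq> {}" using A by (auto simp: irreducible_closed_def)
  have sub: "A \<subseteq> topspace X" using cA closedin_subset by auto
  have dir: "spec_directed X A"
    unfolding spec_directed_def using ne sub directed_irr[OF assms(2-4) A] by blast
  then obtain s where s: "spec_is_sup X A s" using assms(1) by (auto simp: d_space_def spec_dcpo_def)
  have sA: "s \<in> A"
  proof (rule ccontr)
    assume "s \<notin> A"
    have "openin X (topspace X - A)" using cA by auto
    hence "spec_scott_open X (topspace X - A)" using assms(1) by (auto simp: d_space_def)
    hence "A \<inter> (topspace X - A) \<noteq> {}" using dir s \<open>s \<notin> A\<close>
      unfolding spec_scott_open_def spec_is_sup_def by blast
    thus False by auto
  qed
  have "A = X closure_of {s}"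
  proof
    show "A \<subseteq> X closure_of {s}" using s by (auto simp: spec_is_sup_def spec_le_def)
    show "X closure_of {s} \<subseteq> A" using sA cA by (intro closure_of_minimal) auto
  qed
  thus "\<exists>x\<in>topspace X. A = X closure_of {x}" using sA sub by blast
qed

end
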